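(* Let $(X,d)$ be a metric space, $a\in X$, and let $\tilde x$ be a sequence of points of $X$ that is $d$-statistically convergent to $a$. Suppose $\tilde x'=(x_{n(k)})$ is a subsequence of $\tilde x$ for which there exist a sequence $\tilde y$ of points of $X$ and a subsequence $\tilde y'$ of $\tilde y$ such that $\tilde y$ and $\tilde x$ are statistically equivalent, $K_{\tilde x'}=K_{\tilde y'}$, and $\tilde y'$ is not $d$-statistically convergent. Then $\liminf_{n\to\infty}\frac{|K_{\tilde x'}(n)|}{n}=0$.
   Context: For a subsequence $\tilde z'=(z_{n(k)})$ of a sequence $(z_n)$ (with $(n(k))$ infinite and strictly increasing), $K_{\tilde z'}=\{n(k):k\in\mathbb N\}$ and $K_{\tilde z'}(n)=\{m\in K_{\tilde z'}:m\le n\}$. A sequence $(z_k)$ is $d$-statistically convergent to $a$ if $\lim_{n\to\infty}\frac1n|\{k\le n: d(z_k,a)\ge\epsilon\}|=0$ for all $\epsilon>0$, and $d$-statistically convergent if this holds for some $a\in X$; subsequences are regarded as sequences indexed by $k$. A set $M\subseteq\mathbb N$ is statistical dense if $\lim_{n\to\infty}|\{m\in M:m\le n\}|/n=1$; sequences $(x_n),(y_n)$ are statistically equivalent if $x_n=y_n$ for all $n$ in some statistical dense $M$. *)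

theory Defs
  imports "HOL-Analysis.Analysis"
begin

text \<open>Sequences are indexed by nat starting at 0; the n-th initial segment is {k. k < n}.\<close>

definition d_stat_conv_to :: "(nat \<Rightarrow> 'a::metric_space) \<Rightarrow> 'a \<Rightarrow> bool" where
  "d_stat_conv_to z a \<longleftrightarrow>
     (\<forall>\<epsilon>>0. (\<lambda>n. real (card {k. k < n \<and> dist (z k) a \<ge> \<epsilon>}) / real n) \<longlonglongrightarrow> 0)"

definition d_stat_conv :: "(nat \<Rightarrow> 'a::metric_space) \<Rightarrow> bool" where
  "d_stat_conv z \<longleftrightarrow> (\<exists>a. d_stat_conv_to z a)"

definition stat_dense :: "nat set \<Rightarrow> bool" where
  "stat_dense M \<longleftrightarrow> (\<lambda>n. real (card {m\<in>M. m < n}) / real n) \<longlonglongrightarrow> 1"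

definition stat_equiv :: "(nat \<Rightarrow> 'a) \<Rightarrow> (nat \<Rightarrow> 'a) \<Rightarrow> bool" where
  "stat_equiv x y \<longleftrightarrow> (\<exists>M. stat_dense M \<and> (\<forall>n\<in>M. x n = y n))"

text \<open>Index set of the subsequence (z (r k))_k, i.e. K = range r, and its counting set K(n).\<close>
definition subseq_index :: "(nat \<Rightarrow> nat) \<Rightarrow> nat set" where
  "subseq_index r = range r"

definition subseq_index_upto :: "(nat \<Rightarrow> nat) \<Rightarrow> nat \<Rightarrow> nat set" where
  "subseq_index_upto r n = {m \<in> subseq_index r. m < n}"

end

theory Submission
  imports Defs
begin

lemma card_range_below:
  assumes "strict_mono s"
  shows "card {j \<in> range s. j < s m} = m"
proof -
  have e: "{j \<in> range s. j < s m} = s ` {..<m}"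
    using assms by (auto simp: strict_mono_less)
  have "inj s" using assms strict_mono_imp_inj_on by blast
  then have "card (s ` {..<m}) = m"
    by (metis card_image card_lessThan inj_on_subset subset_UNIV)
  then show ?thesis using e by simp
qed

theorem theorem8:
  fixes x y :: "nat \<Rightarrow> 'a::metric_space" and a :: 'a and r s :: "nat \<Rightarrow> nat"
  assumes "d_stat_conv_to x a"
    and "strict_mono r"
    and "strict_mono s"
    and "stat_equiv y x"
    and "subseq_index r = subseq_index s"
    and "\<not> d_stat_conv (y \<circ> s)"
  shows "liminf (\<lambda>n. ereal (real (card (subseq_index_upto r n)) / real n)) = 0"
proof (rule ccontr)
  let ?f = "\<lambda>n. ereal (real (card (subseq_index_upto r n)) / real n)"
  assume ne: "liminf ?f \<noteq> 0"
  have "0 \<le> liminf ?f"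
    by (rule Liminf_bounded) (auto intro: always_eventually)
  with ne have "0 < liminf ?f" by simp
  then obtain \<delta> where d0: "0 < ereal \<delta>" and dL: "ereal \<delta> < liminf ?f"
    using ereal_dense2 by blast
  have dpos: "\<delta> > 0" using d0 by simp
  have ev: "eventually (\<lambda>n. ereal \<delta> < ?f n) sequentially"
    using le_Liminf_iff[THEN iffD1, OF order_refl, rule_format, OF dL] .
  have sinf: "filterlim s at_top sequentially"
    using filterlim_subseq[OF assms(3)] .
  have ev2: "eventually (\<lambda>m. \<delta> < real m / real (s m)) sequentially"
  proof -
    have "eventually (\<lambda>m. ereal \<delta> < ?f (s m)) sequentially"
      using filterlim_iff[THEN iffD1, OF sinf, rule_format, OF ev] .
    then show ?thesis
    proof (rule eventually_mono)
      fix m assume "ereal \<delta> < ?f (s m)"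
      moreover have "subseq_index_upto r (s m) = {j \<in> range s. j < s m}"
        using assms(5) by (simp add: subseq_index_upto_def subseq_index_def)
      ultimately show "\<delta> < real m / real (s m)"
        using card_range_below[OF assms(3)] by simp
    qed
  qed
  obtain M where Md: "stat_dense M" and My: "\<forall>n\<in>M. y n = x n"
    using assms(4) unfolding stat_equiv_def by blast
  have "d_stat_conv_to (y \<circ> s) a"
    unfolding d_stat_conv_to_def
  proof (intro allI impI)
    fix \<epsilon> :: real assume ep: "\<epsilon> > 0"
    define B where "B n = {j. j < n \<and> j \<notin> M}" for n
    define C where "C n = {j. j < n \<and> dist (x j) a \<ge> \<epsilon>}" for n
    define g where "g n = (real (card (B n)) + real (card (C n))) / real n" for n
    have Blim: "(\<lambda>n. real (card (B n)) / real n) \<longlonglongrightarrow> 0"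
    proof -
      have e: "eventually (\<lambda>n. 1 - real (card {m\<in>M. m < n}) / real n = real (card (B n)) / real n) sequentially"
      proof (rule eventually_sequentiallyI[of 1])
        fix n :: nat assume n: "1 \<le> n"
        have "{m\<in>M. m < n} \<union> B n = {..<n}" "{m\<in>M. m < n} \<inter> B n = {}"
          by (auto simp: B_def)
        then have "card {m\<in>M. m < n} + card (B n) = n"
          by (metis card_Un_disjoint card_lessThan finite_Un finite_lessThan)
        then have "real (card {m\<in>M. m < n}) + real (card (B n)) = real n"
          by (metis of_nat_add)
        then show "1 - real (card {m\<in>M. m < n}) / real n = real (card (B n)) / real n"
          using n by (simp add: field_simps)
      qed
      have "(\<lambda>n. 1 - real (card {m\<in>M. m < n}) / real n) \<longlonglongrightarrow> 1 - 1"
        using Md unfolding stat_dense_def by (intro tendsto_diff) auto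
      then show ?thesis using Lim_transform_eventually[OF _ e] by simp
    qed
    have Clim: "(\<lambda>n. real (card (C n)) / real n) \<longlonglongrightarrow> 0"
      using assms(1) ep unfolding d_stat_conv_to_def C_def by blast
    have glim: "g \<longlonglongrightarrow> 0"
    proof -
      have "g = (\<lambda>n. real (card (B n)) / real n + real (card (C n)) / real n)"
        by (rule ext) (simp add: g_def add_divide_distrib)
      then show ?thesis using tendsto_add[OF Blim Clim] by simp
    qed
    have gs: "(\<lambda>m. g (s m) / \<delta>) \<longlonglongrightarrow> 0"
      using tendsto_divide[OF filterlim_compose[OF glim sinf] tendsto_const, of \<delta>] dpos
      by (simp add: o_def)
    show "(\<lambda>n. real (card {k. k < n \<and> \<epsilon> \<le> dist ((y \<circ> s) k) a}) / real n) \<longlonglongrightarrow> 0"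
    proof (rule tendsto_sandwich[OF _ _ tendsto_const gs])
      show "eventually (\<lambda>n. 0 \<le> real (card {k. k < n \<and> \<epsilon> \<le> dist ((y \<circ> s) k) a}) / real n) sequentially"
        by simp
      show "eventually (\<lambda>m. real (card {k. k < m \<and> \<epsilon> \<le> dist ((y \<circ> s) k) a}) / real m \<le> g (s m) / \<delta>) sequentially"
        using ev2
      proof (rule eventually_mono)
        fix m assume dm: "\<delta> < real m / real (s m)"
        let ?bad = "{k. k < m \<and> \<epsilon> \<le> dist ((y \<circ> s) k) a}"
        have m0: "m > 0" using dm dpos by (cases m) auto
        have sm0: "real (s m) > 0" using dm dpos by (cases "s m") auto
        have sub: "s ` ?bad \<subseteq> B (s m) \<union> C (s m)"
        proof
          fix j assume "j \<in> s ` ?bad"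
          then obtain k where k: "k < m" "\<epsilon> \<le> dist (y (s k)) a" "j = s k" by auto
          have "s k < s m" using k(1) assms(3) by (simp add: strict_mono_less)
          then show "j \<in> B (s m) \<union> C (s m)"
            using k My by (cases "s k \<in> M") (auto simp: B_def C_def)
        qed
        have inj: "inj_on s ?bad" using assms(3) strict_mono_imp_inj_on inj_on_subset by blast
        have "card ?bad = card (s ` ?bad)" using card_image[OF inj] by simp
        also have "\<dots> \<le> card (B (s m) \<union> C (s m))"
          by (rule card_mono[OF _ sub]) (auto simp: B_def C_def)
        also have "\<dots> \<le> card (B (s m)) + card (C (s m))" by (rule card_Un_le)
        finally have cb: "real (card ?bad) \<le> g (s m) * real (s m)"
          using sm0 by (simp add: g_def)
        have g0: "g (s m) \<ge> 0" by (simp add: g_def)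
        have "\<delta> * real (s m) < real m" using dm sm0 by (simp add: field_simps)
        then have "g (s m) * real (s m) * \<delta> \<le> g (s m) * real m"
          using g0 by (metis less_eq_real_def mult.assoc mult.commute mult_left_mono)
        then have "real (card ?bad) * \<delta> \<le> g (s m) * real m"
          using cb dpos by (meson mult_right_mono less_eq_real_def order_trans)
        then show "real (card ?bad) / real m \<le> g (s m) / \<delta>"
          using m0 dpos by (simp add: field_simps)
      qed
    qed
  qed
  then show False using assms(6) unfolding d_stat_conv_def by blast
qed

end
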